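(* Let $(G,\sigma)$ be a vertex-oriented 4-regular plane graph with a vertex $v$ such that $V(G)\setminus\{v\}$ is the disjoint union of two nonempty sets $A_1,A_2$, and the edges of $G$ not having both endpoints in the same set $A_1$ or $A_2$ are exactly six: two edges $e_1,e_2$ joining $v$ to $A_1$, two edges $e_3,e_4$ joining $v$ to $A_2$, and two edges $t,b$ each joining a vertex of $A_1$ to a vertex of $A_2$ (endpoints need not be distinct). Suppose $\sigma(v)=\{\{e_1,e_2\},\{e_3,e_4\}\}$, and that $G$ is drawn so that there are disjoint simple closed curves $S_1,S_2$ with $A_i$ inside $S_i$, $v$ outside both, the edges $t,e_1,e_2,b$ crossing $S_1$ in this cyclic order and $t,e_3,e_4,b$ crossing $S_2$ correspondingly. Let $G_1$ be the graph with vertex set $A_1\cup\{v_1\}$ ($v_1$ a new vertex) whose edges are the edges of $G$ with both ends in $A_1$, the edges $e_1,e_2$ with endpoint $v$ replaced by $v_1$, and new edges $t_1,b_1$ joining $v_1$ to the $A_1$-endpoints of $t$ and $b$ respectively; let $\sigma_1$ agree with $\sigma$ on $A_1$ (with $t_1,b_1$ in place of $t,b$) and $\sigma_1(v_1)=\{\{e_1,e_2\},\{t_1,b_1\}\}$. Define $(G_2,\sigma_2)$ symmetrically using $A_2$, $e_3,e_4$, a new vertex $v_2$, new edges $t_2,b_2$, and $\sigma_2(v_2)=\{\{e_3,e_4\},\{t_2,b_2\}\}$. If $(G_1,\sigma_1)$ and $(G_2,\sigma_2)$ both admit $k$-o-colourings, then $(G,\sigma)$ admits a $k$-o-colouring.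
   Context: Graphs may have loops and multiple edges. A 4-regular plane graph has a fixed planar embedding giving a cyclic (embedding) order of the four edge-ends at each vertex. Orientation of a vertex $v$: if $v$ has no loop, a partition of its four edges into two cells of two edges, each cell consisting of two edges consecutive in the embedding order at $v$; if $v$ has exactly one loop $e$ and other edges $f,g$, either $\{\{e,f\},\{e,g\}\}$ (transverse) or $\{\{f,g\},\{e\}\}$ (nontransverse); if $v$ has two loops $e_1,e_2$, the single cell $\{e_1,e_2\}$. A vertex-orientation assigns an orientation to each vertex. An o-colouring of $(G,\sigma)$ is an assignment of colours to edges such that at every vertex $v$ exactly two distinct colours appear on its incident edges and each cell of $\sigma(v)$ contains edges of both colours; a $k$-o-colouring uses at most $k$ colours. (Whether a colouring is an o-colouring depends only on the cells of the orientation, not on the embedding.) *)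

theory Defs
  imports Main "HOL-Library.Multiset"
begin

text \<open>Multigraphs with loops and multiple edges: vertex set V, edge set E, and
  ends e = set of endpoints of e (a singleton for a loop, a 2-set otherwise).\<close>

definition multigraph :: "'v set \<Rightarrow> 'e set \<Rightarrow> ('e \<Rightarrow> 'v set) \<Rightarrow> bool" where
  "multigraph V E ends \<longleftrightarrow> finite V \<and> finite E \<and>
     (\<forall>e\<in>E. ends e \<subseteq> V \<and> ends e \<noteq> {} \<and> finite (ends e) \<and> card (ends e) \<le> 2)"

definition inc_edges :: "'e set \<Rightarrow> ('e \<Rightarrow> 'v set) \<Rightarrow> 'v \<Rightarrow> 'e set" where
  "inc_edges E ends x = {e\<in>E. x \<in> ends e}"

text \<open>Multiset of edge-ends at x (a loop contributes two ends).\<close>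
definition inc_mset :: "'e set \<Rightarrow> ('e \<Rightarrow> 'v set) \<Rightarrow> 'v \<Rightarrow> 'e multiset" where
  "inc_mset E ends x = (\<Sum>e\<in>inc_edges E ends x. if ends e = {x} then {#e, e#} else {#e#})"

text \<open>A 4-regular multigraph with an embedding (rotation system): emb x lists the
  four edge-ends at x in their cyclic embedding order (loops appear twice).\<close>
definition embedded_4reg :: "'v set \<Rightarrow> 'e set \<Rightarrow> ('e \<Rightarrow> 'v set) \<Rightarrow> ('v \<Rightarrow> 'e list) \<Rightarrow> bool" where
  "embedded_4reg V E ends emb \<longleftrightarrow> multigraph V E ends \<and>
     (\<forall>x\<in>V. size (inc_mset E ends x) = 4 \<and> length (emb x) = 4 \<and> mset (emb x) = inc_mset E ends x)"

definition orientation_at ::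
  "'e set \<Rightarrow> ('e \<Rightarrow> 'v set) \<Rightarrow> ('v \<Rightarrow> 'e list) \<Rightarrow> 'v \<Rightarrow> 'e set set \<Rightarrow> bool" where
  "orientation_at E ends emb x C \<longleftrightarrow>
     (let L = {e\<in>E. ends e = {x}}; N = {e\<in>E. x \<in> ends e \<and> ends e \<noteq> {x}} in
       (L = {} \<and> (\<exists>i<4. C = {{emb x ! i, emb x ! ((i+1) mod 4)},
                                {emb x ! ((i+2) mod 4), emb x ! ((i+3) mod 4)}}))
     \<or> (\<exists>e f g. L = {e} \<and> N = {f, g} \<and> f \<noteq> g \<and>
                (C = {{e, f}, {e, g}} \<or> C = {{f, g}, {e}}))
     \<or> (\<exists>e1 e2. L = {e1, e2} \<and> e1 \<noteq> e2 \<and> C = {{e1, e2}}))"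

definition vertex_orientation ::
  "'v set \<Rightarrow> 'e set \<Rightarrow> ('e \<Rightarrow> 'v set) \<Rightarrow> ('v \<Rightarrow> 'e list) \<Rightarrow> ('v \<Rightarrow> 'e set set) \<Rightarrow> bool" where
  "vertex_orientation V E ends emb \<sigma> \<longleftrightarrow> (\<forall>x\<in>V. orientation_at E ends emb x (\<sigma> x))"

text \<open>o-colourings depend only on the cells of the orientation.\<close>
definition o_colouring ::
  "'v set \<Rightarrow> 'e set \<Rightarrow> ('e \<Rightarrow> 'v set) \<Rightarrow> ('v \<Rightarrow> 'e set set) \<Rightarrow> ('e \<Rightarrow> nat) \<Rightarrow> bool" where
  "o_colouring V E ends \<sigma> c \<longleftrightarrow>
     (\<forall>x\<in>V. card (c ` inc_edges E ends x) = 2 \<and>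
             (\<forall>C\<in>\<sigma> x. \<exists>f\<in>C. \<exists>g\<in>C. c f \<noteq> c g))"

definition k_o_colouring ::
  "'v set \<Rightarrow> 'e set \<Rightarrow> ('e \<Rightarrow> 'v set) \<Rightarrow> ('v \<Rightarrow> 'e set set) \<Rightarrow> nat \<Rightarrow> ('e \<Rightarrow> nat) \<Rightarrow> bool" where
  "k_o_colouring V E ends \<sigma> k c \<longleftrightarrow> o_colouring V E ends \<sigma> c \<and> card (c ` E) \<le> k"

text \<open>The split graph G_i: vertices Some a (a in A) plus the new vertex None (= v_i);
  edges: those with both ends in A, plus ea, eb (ends v replaced by v_i) and t, b
  (playing the roles of t_i, b_i: their non-A endpoint replaced by v_i).\<close>
definition proj :: "'v set \<Rightarrow> 'v \<Rightarrow> 'v option" where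
  "proj A x = (if x \<in> A then Some x else None)"

definition split_V :: "'v set \<Rightarrow> 'v option set" where
  "split_V A = insert None (Some ` A)"

definition split_E :: "'e set \<Rightarrow> ('e \<Rightarrow> 'v set) \<Rightarrow> 'v set \<Rightarrow> 'e \<Rightarrow> 'e \<Rightarrow> 'e \<Rightarrow> 'e \<Rightarrow> 'e set" where
  "split_E E ends A ea eb t b = {e\<in>E. ends e \<subseteq> A} \<union> {ea, eb, t, b}"

definition split_ends :: "('e \<Rightarrow> 'v set) \<Rightarrow> 'v set \<Rightarrow> 'e \<Rightarrow> 'v option set" where
  "split_ends ends A e = proj A ` ends e"

definition split_sigma ::
  "('v \<Rightarrow> 'e set set) \<Rightarrow> 'e \<Rightarrow> 'e \<Rightarrow> 'e \<Rightarrow> 'e \<Rightarrow> 'v option \<Rightarrow> 'e set set" where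
  "split_sigma \<sigma> ea eb t b y = (case y of None \<Rightarrow> {{ea, eb}, {t, b}} | Some a \<Rightarrow> \<sigma> a)"

end

theory Submission
  imports Defs
begin


lemma colour_map:
  fixes S1 S2 :: "nat set"
  assumes fin: "finite S1" "finite S2" and p: "p1 \<in> S1" "q1 \<in> S1" "p1 \<noteq> q1"
    and q: "p2 \<in> S2" "q2 \<in> S2" "p2 \<noteq> q2" and k: "card S1 \<le> k" "card S2 \<le> k"
  shows "\<exists>f. inj_on f S2 \<and> f p2 = p1 \<and> f q2 = q1 \<and> card (S1 \<union> f ` S2) \<le> k"
proof -
  define S1' where "S1' = S1 - {p1, q1}"
  define S2' where "S2' = S2 - {p2, q2}"
  have c1: "card S1' = card S1 - 2" using p fin unfolding S1'_def by (simp add: card_Diff_subset)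
  have c2: "card S2' = card S2 - 2" using q fin unfolding S2'_def by (simp add: card_Diff_subset)
  have "card S1 \<ge> 2" using p fin by (metis card_2_iff card_mono empty_subsetI insert_subset)
  have "card S2 \<ge> 2" using q fin by (metis card_2_iff card_mono empty_subsetI insert_subset)
  obtain T where T: "finite T" "card T = card S2'" "T \<inter> {p1, q1} = {}" "card (S1' \<union> T) \<le> k - 2"
  proof (cases "card S2' \<le> card S1'")
    case True
    then obtain T where "T \<subseteq> S1'" "card T = card S2'" "finite T" by (rule obtain_subset_with_card_n)
    note T = this
    have "S1' \<union> T = S1'" using T by auto
    then have "card (S1' \<union> T) \<le> k - 2" using c1 k by simp
    moreover have "T \<inter> {p1, q1} = {}" using T unfolding S1'_def by auto
    ultimately show ?thesis using that[of T] T by blast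
  next
    case False
    have "\<not> finite (UNIV - S1)" using fin by simp
    then obtain F where F: "finite F" "card F = card S2' - card S1'" "F \<subseteq> UNIV - S1"
      using infinite_arbitrarily_large by blast
    have fS1': "finite S1'" using fin unfolding S1'_def by simp
    have dj: "S1' \<inter> F = {}" using F unfolding S1'_def by auto
    have cT: "card (S1' \<union> F) = card S2'" using F False fS1' dj by (simp add: card_Un_disjoint)
    have pF: "p1 \<notin> F" "q1 \<notin> F" using F(3) p by auto
    have "card (S1' \<union> (S1' \<union> F)) \<le> k - 2" using cT c2 k by (simp add: Un_assoc[symmetric])
    moreover have "(S1' \<union> F) \<inter> {p1, q1} = {}" using pF unfolding S1'_def by auto
    ultimately show ?thesis using that[of "S1' \<union> F"] F fS1' cT by (simp add: Un_assoc[symmetric])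
  qed
  have fS2': "finite S2'" using fin unfolding S2'_def by simp
  obtain h where h: "bij_betw h S2' T" using finite_same_card_bij[OF fS2' T(1)] T(2) by auto
  define f where "f x = (if x = p2 then p1 else if x = q2 then q1 else h x)" for x
  have hT: "x \<in> S2' \<Longrightarrow> h x \<in> T" for x using h by (auto simp: bij_betw_def)
  have hinj: "inj_on h S2'" using h by (auto simp: bij_betw_def)
  have fp: "f p2 = p1" and fq: "f q2 = q1" using q unfolding f_def by auto
  have fS: "x \<in> S2' \<Longrightarrow> f x = h x" for x unfolding f_def S2'_def by auto
  have hS: "h ` S2' = T" using h by (simp add: bij_betw_def)
  have fS'img: "f ` S2' = T" using fS hS by (metis image_cong)
  have injS': "inj_on f S2'" using hinj fS inj_on_cong by blast
  have S2eq: "S2 = insert p2 (insert q2 S2')" using q unfolding S2'_def by auto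
  have nq: "q2 \<notin> S2'" "p2 \<notin> S2'" unfolding S2'_def by auto
  have inj1: "inj_on f (insert q2 S2')"
    using injS' nq fq fS'img T(3) by (simp add: inj_on_insert)
  have "f p2 \<notin> f ` (insert q2 S2')" using fp fq fS'img T(3) p(3) by auto
  then have inj: "inj_on f S2" unfolding S2eq using inj1 nq q(3)
    by (simp add: inj_on_insert)
  have img: "f ` S2 = {p1, q1} \<union> T"
  proof -
    have "S2 = {p2, q2} \<union> S2'" using q unfolding S2'_def by auto
    then have "f ` S2 = f ` {p2, q2} \<union> f ` S2'" by auto
    also have "f ` {p2, q2} = {p1, q1}" using fp fq by auto
    also have "f ` S2' = T" by (rule fS'img)
    finally show ?thesis .
  qed
  have "S1 \<union> f ` S2 = {p1, q1} \<union> (S1' \<union> T)" using img p unfolding S1'_def by auto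
  then have "card (S1 \<union> f ` S2) \<le> card {p1, q1} + card (S1' \<union> T)" by (metis card_Un_le)
  also have "\<dots> \<le> k" using T(4) p \<open>card S1 \<ge> 2\<close> k by simp
  finally show ?thesis using inj fp fq by blast
qed

lemma cells_inc:
  assumes G: "embedded_4reg V E ends emb" and x: "x \<in> V"
    and o: "orientation_at E ends emb x C" and X: "X \<in> C"
  shows "X \<subseteq> inc_edges E ends x"
proof -
  have fin: "finite E" using G unfolding embedded_4reg_def multigraph_def by auto
  have finI: "finite (inc_edges E ends x)" using fin unfolding inc_edges_def by simp
  have len: "length (emb x) = 4" and ms: "mset (emb x) = inc_mset E ends x"
    using G x unfolding embedded_4reg_def by auto
  have "set (emb x) = set_mset (mset (emb x))" by simp
  also have "\<dots> = set_mset (inc_mset E ends x)" using ms by simp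
  also have "\<dots> \<subseteq> inc_edges E ends x" unfolding inc_mset_def set_mset_sum[OF finI] by (auto split: if_splits)
  finally have S: "set (emb x) \<subseteq> inc_edges E ends x" .
  have nth: "i < 4 \<Longrightarrow> emb x ! i \<in> inc_edges E ends x" for i using S len nth_mem by fastforce
  show ?thesis using o X unfolding orientation_at_def Let_def
    apply (elim disjE exE conjE)
    subgoal for i using nth[of i] nth[of "(i+1) mod 4"] nth[of "(i+2) mod 4"] nth[of "(i+3) mod 4"] by auto
    subgoal by (auto simp: inc_edges_def)
    subgoal by (auto simp: inc_edges_def)
    subgoal by (auto simp: inc_edges_def)
    done
qed

lemma pairs_eq:
  assumes "card {a, b, c, d :: nat} = 2" "a \<noteq> b" "c \<noteq> d"
  shows "{a, b} = {c, d}"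
proof -
  have "{a, b} = {a, b, c, d}" by (rule card_subset_eq) (use assms in auto)
  moreover have "{c, d} = {a, b, c, d}" by (rule card_subset_eq) (use assms in auto)
  ultimately show ?thesis by simp
qed



theorem lemma3p3:
  fixes V :: "'v set" and E :: "'e set" and ends :: "'e \<Rightarrow> 'v set"
    and emb :: "'v \<Rightarrow> 'e list" and \<sigma> :: "'v \<Rightarrow> 'e set set"
    and v :: 'v and A1 A2 :: "'v set" and e1 e2 e3 e4 t b :: 'e and k :: nat
  assumes G: "embedded_4reg V E ends emb"
    and \<sigma>: "vertex_orientation V E ends emb \<sigma>"
    and v: "v \<in> V"
    and A: "A1 \<union> A2 = V - {v}" "A1 \<inter> A2 = {}" "A1 \<noteq> {}" "A2 \<noteq> {}"
    and inE: "{e1, e2, e3, e4, t, b} \<subseteq> E"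
    and dist: "distinct [e1, e2, e3, e4, t, b]"
    and cross: "{e\<in>E. \<not> (ends e \<subseteq> A1 \<or> ends e \<subseteq> A2)} = {e1, e2, e3, e4, t, b}"
    and e1: "\<exists>a\<in>A1. ends e1 = {v, a}" and e2: "\<exists>a\<in>A1. ends e2 = {v, a}"
    and e3: "\<exists>a\<in>A2. ends e3 = {v, a}" and e4: "\<exists>a\<in>A2. ends e4 = {v, a}"
    and t: "\<exists>x\<in>A1. \<exists>y\<in>A2. ends t = {x, y}"
    and b: "\<exists>x\<in>A1. \<exists>y\<in>A2. ends b = {x, y}"
    and \<sigma>v: "\<sigma> v = {{e1, e2}, {e3, e4}}"
    and col1: "\<exists>c1. k_o_colouring (split_V A1) (split_E E ends A1 e1 e2 t b)
                 (split_ends ends A1) (split_sigma \<sigma> e1 e2 t b) k c1"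
    and col2: "\<exists>c2. k_o_colouring (split_V A2) (split_E E ends A2 e3 e4 t b)
                 (split_ends ends A2) (split_sigma \<sigma> e3 e4 t b) k c2"
  shows "\<exists>c. k_o_colouring V E ends \<sigma> k c"
proof -
  define E1 where "E1 = split_E E ends A1 e1 e2 t b"
  define E2 where "E2 = split_E E ends A2 e3 e4 t b"
  define n1 where "n1 = split_ends ends A1"
  define n2 where "n2 = split_ends ends A2"
  obtain c1 where c1: "k_o_colouring (split_V A1) E1 n1 (split_sigma \<sigma> e1 e2 t b) k c1"
    using col1 unfolding E1_def n1_def by blast
  obtain c2 where c2: "k_o_colouring (split_V A2) E2 n2 (split_sigma \<sigma> e3 e4 t b) k c2"
    using col2 unfolding E2_def n2_def by blast
  have finE: "finite E" and endsne: "\<And>e. e \<in> E \<Longrightarrow> ends e \<noteq> {}"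
    using G unfolding embedded_4reg_def multigraph_def by auto
  have vA1: "v \<notin> A1" and vA2: "v \<notin> A2" using A by auto
  obtain a1 where a1: "a1 \<in> A1" "ends e1 = {v, a1}" using e1 by blast
  obtain a2 where a2: "a2 \<in> A1" "ends e2 = {v, a2}" using e2 by blast
  obtain a3 where a3: "a3 \<in> A2" "ends e3 = {v, a3}" using e3 by blast
  obtain a4 where a4: "a4 \<in> A2" "ends e4 = {v, a4}" using e4 by blast
  obtain xt yt where xt: "xt \<in> A1" "yt \<in> A2" "ends t = {xt, yt}" using t by blast
  obtain xb yb where xb: "xb \<in> A1" "yb \<in> A2" "ends b = {xb, yb}" using b by blast
  have nx: "xt \<notin> A2" "xb \<notin> A2" "yt \<notin> A1" "yb \<notin> A1" using xt xb A(2) by auto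
  have E1eq: "E1 = {e\<in>E. ends e \<subseteq> A1} \<union> {e1, e2, t, b}" unfolding E1_def split_E_def ..
  have E2eq: "E2 = {e\<in>E. ends e \<subseteq> A2} \<union> {e3, e4, t, b}" unfolding E2_def split_E_def ..
  have E1E: "E1 \<subseteq> E" using inE E1eq by auto
  have E2E: "E2 \<subseteq> E" using inE E2eq by auto
  have EU: "E \<subseteq> E1 \<union> E2"
  proof
    fix e assume "e \<in> E"
    show "e \<in> E1 \<union> E2"
    proof (cases "ends e \<subseteq> A1 \<or> ends e \<subseteq> A2")
      case True then show ?thesis using \<open>e \<in> E\<close> E1eq E2eq by auto
    next
      case False
      then have "e \<in> {e1, e2, e3, e4, t, b}" using cross \<open>e \<in> E\<close> by blast
      then show ?thesis using E1eq E2eq by auto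
    qed
  qed
  have E12: "E1 \<inter> E2 \<subseteq> {t, b}"
  proof
    fix e assume e: "e \<in> E1 \<inter> E2"
    have "ends e \<noteq> {}" using e E1E endsne by auto
    have d: "e1 \<noteq> e3" "e1 \<noteq> e4" "e2 \<noteq> e3" "e2 \<noteq> e4" using dist by auto
    have m1: "ends e \<subseteq> A1 \<or> e \<in> {e1, e2, t, b}" using e E1eq by blast
    have m2: "ends e \<subseteq> A2 \<or> e \<in> {e3, e4, t, b}" using e E2eq by blast
    have v1: "e \<in> {e1, e2, e3, e4} \<Longrightarrow> v \<in> ends e" using a1 a2 a3 a4 by auto
    show "e \<in> {t, b}"
    proof (rule ccontr)
      assume nt: "e \<notin> {t, b}"
      from m1 m2 show False
      proof (elim disjE)
        assume "ends e \<subseteq> A1" "ends e \<subseteq> A2"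
        then show False using \<open>ends e \<noteq> {}\<close> A(2) by blast
      next
        assume "ends e \<subseteq> A1" "e \<in> {e3, e4, t, b}"
        then show False using nt v1 vA1 by blast
      next
        assume "e \<in> {e1, e2, t, b}" "ends e \<subseteq> A2"
        then show False using nt v1 vA2 by blast
      next
        assume "e \<in> {e1, e2, t, b}" "e \<in> {e3, e4, t, b}"
        then show False using nt d by blast
      qed
    qed
  qed
  have fin1: "finite E1" "finite E2" using finE E1E E2E finite_subset by auto
  have tbE1: "t \<in> E1" "b \<in> E1" "e1 \<in> E1" "e2 \<in> E1" using E1eq by auto
  have tbE2: "t \<in> E2" "b \<in> E2" "e3 \<in> E2" "e4 \<in> E2" using E2eq by auto
  have inc1N: "inc_edges E1 n1 None = {e1, e2, t, b}"
  proof
    show "inc_edges E1 n1 None \<subseteq> {e1, e2, t, b}"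
      unfolding inc_edges_def n1_def split_ends_def proj_def using E1eq by (auto split: if_splits)
    show "{e1, e2, t, b} \<subseteq> inc_edges E1 n1 None"
      unfolding inc_edges_def n1_def split_ends_def proj_def using tbE1 a1 a2 xt xb vA1 A(2)
      by (auto intro!: image_eqI)
  qed
  have inc2N: "inc_edges E2 n2 None = {e3, e4, t, b}"
  proof
    show "inc_edges E2 n2 None \<subseteq> {e3, e4, t, b}"
      unfolding inc_edges_def n2_def split_ends_def proj_def using E2eq by (auto split: if_splits)
    show "{e3, e4, t, b} \<subseteq> inc_edges E2 n2 None"
      unfolding inc_edges_def n2_def split_ends_def proj_def using tbE2 a3 a4 xt xb vA2 A(2)
      by (auto simp: image_iff)
  qed
  have o1: "o_colouring (split_V A1) E1 n1 (split_sigma \<sigma> e1 e2 t b) c1"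
    using c1 unfolding k_o_colouring_def by blast
  have o2: "o_colouring (split_V A2) E2 n2 (split_sigma \<sigma> e3 e4 t b) c2"
    using c2 unfolding k_o_colouring_def by blast
  have N1: "card (c1 ` inc_edges E1 n1 None) = 2"
    "\<forall>C\<in>split_sigma \<sigma> e1 e2 t b None. \<exists>f\<in>C. \<exists>g\<in>C. c1 f \<noteq> c1 g"
    using o1 unfolding o_colouring_def split_V_def by blast+
  have N2: "card (c2 ` inc_edges E2 n2 None) = 2"
    "\<forall>C\<in>split_sigma \<sigma> e3 e4 t b None. \<exists>f\<in>C. \<exists>g\<in>C. c2 f \<noteq> c2 g"
    using o2 unfolding o_colouring_def split_V_def by blast+
  have ss1: "split_sigma \<sigma> e1 e2 t b None = {{e1, e2}, {t, b}}" by (simp add: split_sigma_def)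
  have ss2: "split_sigma \<sigma> e3 e4 t b None = {{e3, e4}, {t, b}}" by (simp add: split_sigma_def)
  have c1N: "card (c1 ` {e1, e2, t, b}) = 2" "c1 e1 \<noteq> c1 e2" "c1 t \<noteq> c1 b"
    using N1 unfolding inc1N ss1 by auto
  have c2N: "card (c2 ` {e3, e4, t, b}) = 2" "c2 e3 \<noteq> c2 e4" "c2 t \<noteq> c2 b"
    using N2 unfolding inc2N ss2 by auto
  have p1: "{c1 e1, c1 e2} = {c1 t, c1 b}" using pairs_eq[of "c1 e1" "c1 e2" "c1 t" "c1 b"] c1N by simp
  have p2: "{c2 e3, c2 e4} = {c2 t, c2 b}" using pairs_eq[of "c2 e3" "c2 e4" "c2 t" "c2 b"] c2N by simp
  obtain f where f: "inj_on f (c2 ` E2)" "f (c2 t) = c1 t" "f (c2 b) = c1 b"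
    "card (c1 ` E1 \<union> f ` (c2 ` E2)) \<le> k"
    using colour_map[of "c1 ` E1" "c2 ` E2" "c1 t" "c1 b" "c2 t" "c2 b" k]
      fin1 tbE1 tbE2 c1N c2N c1 c2 unfolding k_o_colouring_def by auto
  define c where "c e = (if e \<in> E1 then c1 e else f (c2 e))" for e
  have cE1: "e \<in> E1 \<Longrightarrow> c e = c1 e" for e unfolding c_def by simp
  have cE2: "e \<in> E2 \<Longrightarrow> c e = f (c2 e)" for e
    using E12 f unfolding c_def by auto
  have orient: "x \<in> V \<Longrightarrow> C \<in> \<sigma> x \<Longrightarrow> C \<subseteq> inc_edges E ends x" for x C
    using cells_inc[OF G] \<sigma> unfolding vertex_orientation_def by blast
  have oc: "o_colouring V E ends \<sigma> c"
    unfolding o_colouring_def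
  proof (rule ballI)
    fix x assume x: "x \<in> V"
    have "x = v \<or> x \<in> A1 \<or> x \<in> A2" using x A(1) by auto
    then have "card (c ` inc_edges E ends x) = 2 \<and> (\<forall>C\<in>\<sigma> x. \<exists>f\<in>C. \<exists>g\<in>C. c f \<noteq> c g)"
    proof (elim disjE)
      assume xv: "x = v"
      have inc: "inc_edges E ends v = {e1, e2, e3, e4}"
      proof
        show "inc_edges E ends v \<subseteq> {e1, e2, e3, e4}"
        proof
          fix e assume e: "e \<in> inc_edges E ends v"
          then have "e \<in> {e1, e2, e3, e4, t, b}" using cross vA1 vA2 unfolding inc_edges_def by blast
          then show "e \<in> {e1, e2, e3, e4}" using e xt xb vA1 vA2 unfolding inc_edges_def by auto
        qed
        show "{e1, e2, e3, e4} \<subseteq> inc_edges E ends v"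
          using inE a1 a2 a3 a4 unfolding inc_edges_def by auto
      qed
      have "f ` {c2 e3, c2 e4} = {c1 e1, c1 e2}" using p1 p2 f by auto
      then have "c ` {e1, e2, e3, e4} = {c1 e1, c1 e2}"
        using cE1 cE2 tbE1 tbE2 by auto
      moreover have "c e3 \<noteq> c e4" using cE2 tbE2 c2N f(1) tbE2
        by (metis image_eqI inj_on_contraD)
      moreover have "c e1 \<noteq> c e2" using cE1 tbE1 c1N by auto
      ultimately show ?thesis using xv inc \<sigma>v c1N(2) by auto
    next
      assume xA: "x \<in> A1"
      have inc: "inc_edges E ends x = inc_edges E1 n1 (Some x)"
      proof
        show "inc_edges E ends x \<subseteq> inc_edges E1 n1 (Some x)"
        proof
          fix e assume e: "e \<in> inc_edges E ends x"
          have "e \<in> E1"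
          proof (cases "ends e \<subseteq> A1")
            case True then show ?thesis using e E1eq unfolding inc_edges_def by auto
          next
            case False
            have "\<not> ends e \<subseteq> A2" using e xA A(2) unfolding inc_edges_def by auto
            then have "e \<in> {e1, e2, e3, e4, t, b}" using cross e False unfolding inc_edges_def by blast
            moreover have "e \<noteq> e3" "e \<noteq> e4" using e a3 a4 xA vA1 A(2) unfolding inc_edges_def by auto
            ultimately show ?thesis using E1eq by auto
          qed
          then show "e \<in> inc_edges E1 n1 (Some x)" using e xA
            unfolding inc_edges_def n1_def split_ends_def proj_def by (auto intro!: image_eqI)
        qed
        show "inc_edges E1 n1 (Some x) \<subseteq> inc_edges E ends x"
          using E1E unfolding inc_edges_def n1_def split_ends_def proj_def by (auto split: if_splits)
      qed
      have sub: "inc_edges E ends x \<subseteq> E1" using inc unfolding inc_edges_def by auto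
      have xV1: "Some x \<in> split_V A1" using xA unfolding split_V_def by auto
      have "card (c1 ` inc_edges E1 n1 (Some x)) = 2" "\<forall>C\<in>\<sigma> x. \<exists>f\<in>C. \<exists>g\<in>C. c1 f \<noteq> c1 g"
        using c1 xV1 unfolding k_o_colouring_def o_colouring_def split_sigma_def by auto
      moreover have "c ` inc_edges E ends x = c1 ` inc_edges E ends x"
        using sub cE1 by (intro image_cong) auto
      moreover have "\<forall>C\<in>\<sigma> x. \<forall>e\<in>C. c e = c1 e" using orient[OF x] sub cE1 by blast
      ultimately show ?thesis using inc by metis
    next
      assume xA: "x \<in> A2"
      have inc: "inc_edges E ends x = inc_edges E2 n2 (Some x)"
      proof
        show "inc_edges E ends x \<subseteq> inc_edges E2 n2 (Some x)"
        proof
          fix e assume e: "e \<in> inc_edges E ends x"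
          have "e \<in> E2"
          proof (cases "ends e \<subseteq> A2")
            case True then show ?thesis using e E2eq unfolding inc_edges_def by auto
          next
            case False
            have "\<not> ends e \<subseteq> A1" using e xA A(2) unfolding inc_edges_def by auto
            then have "e \<in> {e1, e2, e3, e4, t, b}" using cross e False unfolding inc_edges_def by blast
            moreover have "e \<noteq> e1" "e \<noteq> e2" using e a1 a2 xA vA2 A(2) unfolding inc_edges_def by auto
            ultimately show ?thesis using E2eq by auto
          qed
          then show "e \<in> inc_edges E2 n2 (Some x)" using e xA
            unfolding inc_edges_def n2_def split_ends_def proj_def by (auto intro!: image_eqI)
        qed
        show "inc_edges E2 n2 (Some x) \<subseteq> inc_edges E ends x"
          using E2E unfolding inc_edges_def n2_def split_ends_def proj_def by (auto split: if_splits)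
      qed
      have sub: "inc_edges E ends x \<subseteq> E2" using inc unfolding inc_edges_def by auto
      have xV2: "Some x \<in> split_V A2" using xA unfolding split_V_def by auto
      have h1: "card (c2 ` inc_edges E ends x) = 2" "\<forall>C\<in>\<sigma> x. \<exists>f\<in>C. \<exists>g\<in>C. c2 f \<noteq> c2 g"
        using c2 xV2 inc unfolding k_o_colouring_def o_colouring_def split_sigma_def by auto
      have injs: "inj_on f (c2 ` inc_edges E ends x)" using f(1) sub by (meson image_mono inj_on_subset)
      have "c ` inc_edges E ends x = (\<lambda>e. f (c2 e)) ` inc_edges E ends x"
        using sub cE2 by (intro image_cong) auto
      then have "c ` inc_edges E ends x = f ` c2 ` inc_edges E ends x" by (simp add: image_image)
      then have "card (c ` inc_edges E ends x) = 2" using h1 injs by (simp add: card_image)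
      moreover have "\<forall>C\<in>\<sigma> x. \<exists>f\<in>C. \<exists>g\<in>C. c f \<noteq> c g"
      proof
        fix C assume C: "C \<in> \<sigma> x"
        then obtain g h where gh: "g \<in> C" "h \<in> C" "c2 g \<noteq> c2 h" using h1 by blast
        have "g \<in> E2" "h \<in> E2" using gh orient[OF x C] sub by auto
        then have "c g \<noteq> c h" using cE2 gh f(1) by (metis image_eqI inj_on_contraD)
        then show "\<exists>f\<in>C. \<exists>g\<in>C. c f \<noteq> c g" using gh by blast
      qed
      ultimately show ?thesis by blast
    qed
    then show "card (c ` inc_edges E ends x) = 2 \<and> (\<forall>C\<in>\<sigma> x. \<exists>f\<in>C. \<exists>g\<in>C. c f \<noteq> c g)" .
  qed
  have "c ` E \<subseteq> c1 ` E1 \<union> f ` (c2 ` E2)"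
  proof
    fix y assume "y \<in> c ` E"
    then obtain e where e: "e \<in> E" "y = c e" by blast
    show "y \<in> c1 ` E1 \<union> f ` (c2 ` E2)"
    proof (cases "e \<in> E1")
      case True then show ?thesis using e cE1 by auto
    next
      case False then have "e \<in> E2" using EU e by blast
      then show ?thesis using e cE2 by auto
    qed
  qed
  moreover have "finite (c1 ` E1 \<union> f ` (c2 ` E2))" using fin1 by simp
  ultimately have "card (c ` E) \<le> card (c1 ` E1 \<union> f ` (c2 ` E2))" by (simp add: card_mono)
  then have "card (c ` E) \<le> k" using f(4) by linarith
  then show ?thesis using oc unfolding k_o_colouring_def by blast
qed

end
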